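(* Let $f\in C^2(r_{\mathcal{C}},\infty)$ with $f(r)>0$ for all $r>r_{\mathcal{C}}$, and let $X=f(r)\partial_r$. Then for every (sufficiently regular) function $\psi$ on the expanding region of Schwarzschild–de Sitter, $$\square_g(X\psi)=X(\square_g\psi)+\frac{f^2}{r^2}\partial_r\Big(\frac{r^2\phi^{-2}}{f^2}\Big)\partial_r(X\psi)+\frac{f^2}{r^2}\partial_r^2\Big(\frac{r^2\phi^{-2}}{f}\Big)\partial_r\psi+2f\phi^4\Big(\frac1r-\frac{3m}{r^2}\Big)\partial_t^2\psi+\frac{2f}{r}\square_g\psi.$$
   Context: Fix $\Lambda>0$, $0<3m<1/\sqrt\Lambda$; $D(r)=\frac{\Lambda}{3}r^2-1+\frac{2m}{r}$, $r_{\mathcal{C}}$ its largest positive root; expanding region $(r_{\mathcal{C}},\infty)_r\times\mathbb{R}_t\times\mathbb{S}^2$ with $g=-D^{-1}dr^2+Ddt^2+r^2\gamma_{\mathbb{S}^2}$, lapse $\phi=D^{-1/2}$, and $\square_g\psi=\phi^2\partial_t^2\psi-r^{-2}\partial_r(r^2\phi^{-2}\partial_r\psi)+r^{-2}\Delta_{\mathbb{S}^2}\psi$. *)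

theory Defs
  imports "HOL-Analysis.Analysis"
begin

definition D_sds :: "real \<Rightarrow> real \<Rightarrow> real \<Rightarrow> real" where
  "D_sds \<Lambda> m r = \<Lambda> / 3 * r ^ 2 - 1 + 2 * m / r"

definition r_C :: "real \<Rightarrow> real \<Rightarrow> real" where
  "r_C \<Lambda> m = Max {r. 0 < r \<and> D_sds \<Lambda> m r = 0}"

text \<open>C^k on a set (for open sets): iterated Frechet derivatives in every direction
  exist and are continuous.\<close>
fun Ck :: "nat \<Rightarrow> 'a::real_normed_vector set \<Rightarrow> ('a \<Rightarrow> real) \<Rightarrow> bool" where
  "Ck 0 S g = continuous_on S g"
| "Ck (Suc k) S g = (g differentiable_on S \<and> continuous_on S g \<and>
      (\<forall>v. Ck k S (\<lambda>x. frechet_derivative g (at x) v)))"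

text \<open>Coordinates p = (r, t, theta, phi) on the expanding region, with (theta, phi)
  standard polar coordinates on the sphere.\<close>
type_synonym pt = "real \<times> real \<times> real \<times> real"

definition e_r :: pt where "e_r = (1, 0, 0, 0)"
definition e_t :: pt where "e_t = (0, 1, 0, 0)"
definition e_th :: pt where "e_th = (0, 0, 1, 0)"
definition e_ph :: pt where "e_ph = (0, 0, 0, 1)"

definition pd :: "pt \<Rightarrow> (pt \<Rightarrow> real) \<Rightarrow> pt \<Rightarrow> real" where
  "pd v g p = frechet_derivative g (at p) v"

definition rad :: "pt \<Rightarrow> real" where "rad p = fst p"
definition theta :: "pt \<Rightarrow> real" where "theta p = fst (snd (snd p))"

definition lap_S2 :: "(pt \<Rightarrow> real) \<Rightarrow> pt \<Rightarrow> real" where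
  "lap_S2 g p = 1 / sin (theta p) * pd e_th (\<lambda>q. sin (theta q) * pd e_th g q) p
               + 1 / (sin (theta p))^2 * pd e_ph (pd e_ph g) p"

text \<open>Wave operator, with lapse phi = D^(-1/2), so phi^2 = 1/D and phi^(-2) = D:
  box psi = phi^2 dt^2 psi - r^-2 dr(r^2 phi^-2 dr psi) + r^-2 Lap_S2 psi.\<close>
definition box_g :: "real \<Rightarrow> real \<Rightarrow> (pt \<Rightarrow> real) \<Rightarrow> pt \<Rightarrow> real" where
  "box_g \<Lambda> m g p =
     1 / D_sds \<Lambda> m (rad p) * pd e_t (pd e_t g) p
     - 1 / (rad p)^2 * pd e_r (\<lambda>q. (rad q)^2 * D_sds \<Lambda> m (rad q) * pd e_r g q) p
     + 1 / (rad p)^2 * lap_S2 g p"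

definition expanding_region :: "real \<Rightarrow> real \<Rightarrow> pt set" where
  "expanding_region \<Lambda> m = {r_C \<Lambda> m<..} \<times> UNIV \<times> {0<..<pi} \<times> UNIV"

end

theory Submission
  imports Defs "HOL-Computational_Algebra.Polynomial"
begin

lemma pd_has: "(g has_derivative g') (at p) \<Longrightarrow> pd v g p = g' v"
  unfolding pd_def by (metis frechet_derivative_at)

lemma pd_cong:
  assumes "open S" "p \<in> S" "\<And>q. q \<in> S \<Longrightarrow> g q = h q"
  shows "pd v g p = pd v h p"
proof -
  have "\<And>g'. (g has_derivative g') (at p) \<longleftrightarrow> (h has_derivative g') (at p)"
    using assms has_derivative_transform_within_open[of _ _ p UNIV S] by metis
  then show ?thesis unfolding pd_def frechet_derivative_def by simp
qed

lemma pd_eta: "(\<lambda>x. frechet_derivative g (at x) v) = pd v g"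
  by (simp add: pd_def fun_eq_iff)

lemma Ck_Suc_mono: "Ck (Suc k) S g \<Longrightarrow> Ck k S g"
proof (induction k arbitrary: g)
  case 0 then show ?case by simp
next
  case (Suc k) then show ?case by (metis Ck.simps(2))
qed

lemma Ck_le: "Ck (k + j) S g \<Longrightarrow> Ck k S g"
  by (induction j) (auto dest: Ck_Suc_mono simp del: Ck.simps)

lemma Ck_SucD:
  assumes "Ck (Suc k) S g" "open S" "x \<in> S"
  shows "g differentiable (at x)" "Ck k S (pd v g)"
proof -
  have *: "g differentiable_on S \<and> continuous_on S g \<and> (\<forall>v. Ck k S (pd v g))"
    using assms(1) by (subst (asm) Ck.simps(2)) (simp add: pd_eta)
  then show "g differentiable (at x)" using assms(2,3) by (simp add: differentiable_on_eq_differentiable_at)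
  show "Ck k S (pd v g)" using * by blast
qed

lemma Ck0_cont: "Ck 0 S g \<Longrightarrow> open S \<Longrightarrow> x \<in> S \<Longrightarrow> isCont g x"
  by (simp add: continuous_on_eq_continuous_at)

lemma line_deriv:
  assumes "g differentiable (at (a + s *\<^sub>R v))"
  shows "((\<lambda>s. g (a + s *\<^sub>R v)) has_real_derivative pd v g (a + s *\<^sub>R v)) (at s)"
proof -
  let ?y = "a + s *\<^sub>R v"
  have gd: "(g has_derivative frechet_derivative g (at ?y)) (at ?y)"
    using assms frechet_derivative_works by blast
  have ln: "((\<lambda>s. a + s *\<^sub>R v) has_derivative (\<lambda>t. t *\<^sub>R v)) (at s)"
    by (auto intro!: derivative_eq_intros)
  have c: "((\<lambda>s. g (a + s *\<^sub>R v)) has_derivative (\<lambda>t. frechet_derivative g (at ?y) (t *\<^sub>R v))) (at s)"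
    using has_derivative_compose[OF ln gd] by (simp add: o_def)
  have lin: "linear (frechet_derivative g (at ?y))"
    using gd has_derivative_linear by blast
  have "(\<lambda>t. frechet_derivative g (at ?y) (t *\<^sub>R v)) = (\<lambda>t. pd v g ?y * t)"
    using linear_scale[OF lin] by (auto simp: pd_def fun_eq_iff)
  then show ?thesis using c by (simp add: has_field_derivative_def)
qed

lemma schwarz_core:
  fixes g :: "pt \<Rightarrow> real"
  assumes S: "open S" and C: "Ck 2 S g" and h: "0 < h"
    and box: "\<And>s t. 0 \<le> s \<Longrightarrow> s \<le> h \<Longrightarrow> 0 \<le> t \<Longrightarrow> t \<le> h \<Longrightarrow> x + s *\<^sub>R v + t *\<^sub>R w \<in> S"
  shows "\<exists>\<xi> \<eta>. 0 \<le> \<xi> \<and> \<xi> \<le> h \<and> 0 \<le> \<eta> \<and> \<eta> \<le> h \<and>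
     g (x + h *\<^sub>R v + h *\<^sub>R w) - g (x + h *\<^sub>R v) - g (x + h *\<^sub>R w) + g x
       = h * h * pd w (pd v g) (x + \<xi> *\<^sub>R v + \<eta> *\<^sub>R w)"
proof -
  have C': "Ck (Suc (Suc 0)) S g" using C by (simp only: numeral_2_eq_2)
  have dg: "g differentiable (at y)" if "y \<in> S" for y
    using Ck_SucD(1)[OF C' S that] .
  have C1: "Ck (Suc 0) S (pd v g)" using Ck_SucD(2)[OF C' S] box[of 0 0] h by auto
  have dG: "pd v g differentiable (at y)" if "y \<in> S" for y
    using Ck_SucD(1)[OF C1 S that] .
  define \<phi> where "\<phi> s = g (x + h *\<^sub>R w + s *\<^sub>R v) - g (x + s *\<^sub>R v)" for s
  have "\<exists>z. 0 < z \<and> z < h \<and> \<phi> h - \<phi> 0 = (h - 0) *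
          (pd v g (x + h *\<^sub>R w + z *\<^sub>R v) - pd v g (x + z *\<^sub>R v))"
  proof (rule MVT2[OF h])
    fix s assume s: "0 \<le> s" "s \<le> h"
    have m1: "x + h *\<^sub>R w + s *\<^sub>R v \<in> S" using box[OF s, of h] h by (simp add: algebra_simps)
    have m2: "x + s *\<^sub>R v \<in> S" using box[OF s, of 0] h by simp
    show "(\<phi> has_real_derivative (pd v g (x + h *\<^sub>R w + s *\<^sub>R v) - pd v g (x + s *\<^sub>R v))) (at s)"
      unfolding \<phi>_def
      by (intro derivative_intros line_deriv dg m1 m2)
  qed
  then obtain \<xi> where xi: "0 < \<xi>" "\<xi> < h" and eq1: "\<phi> h - \<phi> 0 = h *
          (pd v g (x + h *\<^sub>R w + \<xi> *\<^sub>R v) - pd v g (x + \<xi> *\<^sub>R v))" by auto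
  have "\<exists>z. 0 < z \<and> z < h \<and> pd v g (x + \<xi> *\<^sub>R v + h *\<^sub>R w) - pd v g (x + \<xi> *\<^sub>R v + 0 *\<^sub>R w) = (h - 0) *
          pd w (pd v g) (x + \<xi> *\<^sub>R v + z *\<^sub>R w)"
  proof (rule MVT2[OF h])
    fix t assume t: "0 \<le> t" "t \<le> h"
    show "((\<lambda>t. pd v g (x + \<xi> *\<^sub>R v + t *\<^sub>R w)) has_real_derivative pd w (pd v g) (x + \<xi> *\<^sub>R v + t *\<^sub>R w)) (at t)"
      by (intro line_deriv dG box t) (use xi in auto)
  qed
  then obtain \<eta> where eta: "0 < \<eta>" "\<eta> < h" and eq2: "pd v g (x + \<xi> *\<^sub>R v + h *\<^sub>R w) - pd v g (x + \<xi> *\<^sub>R v) = h *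
          pd w (pd v g) (x + \<xi> *\<^sub>R v + \<eta> *\<^sub>R w)" by auto
  have "g (x + h *\<^sub>R v + h *\<^sub>R w) - g (x + h *\<^sub>R v) - g (x + h *\<^sub>R w) + g x = \<phi> h - \<phi> 0"
    unfolding \<phi>_def by (simp add: algebra_simps)
  also have "\<dots> = h * h * pd w (pd v g) (x + \<xi> *\<^sub>R v + \<eta> *\<^sub>R w)"
    using eq1 eq2 by (simp add: algebra_simps)
  finally show ?thesis using xi eta by (intro exI[of _ \<xi>] exI[of _ \<eta>]) auto
qed

lemma schwarz:
  fixes g :: "pt \<Rightarrow> real"
  assumes S: "open S" and C: "Ck 2 S g" and x: "x \<in> S"
  shows "pd v (pd w g) x = pd w (pd v g) x"
proof (rule ccontr)
  let ?F = "pd w (pd v g)" and ?G = "pd v (pd w g)"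
  assume ne: "?G x \<noteq> ?F x"
  define e where "e = \<bar>?F x - ?G x\<bar> / 2"
  have e: "e > 0" using ne by (simp add: e_def)
  have C': "Ck (Suc (Suc 0)) S g" using C by (simp only: numeral_2_eq_2)
  have cF: "isCont ?F x"
    using Ck0_cont[OF Ck_SucD(2)[OF Ck_SucD(2)[OF C' S x] S x] S x] .
  have cG: "isCont ?G x"
    using Ck0_cont[OF Ck_SucD(2)[OF Ck_SucD(2)[OF C' S x] S x] S x] .
  obtain d1 where d1: "d1 > 0" "\<And>y. dist y x < d1 \<Longrightarrow> dist (?F y) (?F x) < e"
    using cF e unfolding continuous_at_eps_delta by metis
  obtain d2 where d2: "d2 > 0" "\<And>y. dist y x < d2 \<Longrightarrow> dist (?G y) (?G x) < e"
    using cG e unfolding continuous_at_eps_delta by metis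
  obtain d0 where d0: "d0 > 0" "ball x d0 \<subseteq> S" using S x open_contains_ball by blast
  define d where "d = min d0 (min d1 d2)"
  have d: "d > 0" using d0 d1 d2 by (simp add: d_def)
  define h where "h = d / (2 * (norm v + norm w + 1))"
  have pos: "norm v + norm w + 1 > 0" by (simp add: add_pos_nonneg add_nonneg_pos)
  have h: "h > 0" using d unfolding h_def by (intro divide_pos_pos) (auto intro: add_pos_nonneg add_nonneg_pos)
  have hd: "h * (norm v + norm w + 1) = d / 2" unfolding h_def using pos by (simp add: field_simps)
  have hb: "2 * (h * (norm v + norm w)) < d"
  proof -
    have "2 * (h * (norm v + norm w)) = 2 * (h * (norm v + norm w + 1)) - 2 * h"
      by (simp add: algebra_simps)
    then show ?thesis using hd h by linarith
  qed
  have close: "dist (x + s *\<^sub>R a + t *\<^sub>R b) x < d"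
    if "0 \<le> s" "s \<le> h" "0 \<le> t" "t \<le> h" "a \<in> {v, w}" "b \<in> {v, w}" for s t a b
  proof -
    have "dist (x + s *\<^sub>R a + t *\<^sub>R b) x = norm (s *\<^sub>R a + t *\<^sub>R b)"
      by (simp add: dist_norm)
    also have "\<dots> \<le> s * norm a + t * norm b"
      using norm_triangle_ineq[of "s *\<^sub>R a" "t *\<^sub>R b"] that by simp
    also have "\<dots> \<le> h * norm a + h * norm b"
      using that by (intro add_mono mult_right_mono) auto
    also have "\<dots> \<le> h * (norm v + norm w) + h * (norm v + norm w)"
      using that h by (intro add_mono mult_left_mono) auto
    finally have "dist (x + s *\<^sub>R a + t *\<^sub>R b) x \<le> 2 * (h * (norm v + norm w))" by simp
    then show ?thesis using hb by linarith
  qed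
  have inS: "x + s *\<^sub>R a + t *\<^sub>R b \<in> S"
    if "0 \<le> s" "s \<le> h" "0 \<le> t" "t \<le> h" "a \<in> {v, w}" "b \<in> {v, w}" for s t a b
    using close[OF that] d0(2) unfolding d_def by (auto simp: dist_commute subset_iff simp del: Product_Type.split_paired_All)
  obtain \<xi>1 \<eta>1 where A: "0 \<le> \<xi>1" "\<xi>1 \<le> h" "0 \<le> \<eta>1" "\<eta>1 \<le> h"
    "g (x + h *\<^sub>R v + h *\<^sub>R w) - g (x + h *\<^sub>R v) - g (x + h *\<^sub>R w) + g x
       = h * h * ?F (x + \<xi>1 *\<^sub>R v + \<eta>1 *\<^sub>R w)"
    using schwarz_core[OF S C h, of x v w] inS by blast
  obtain \<xi>2 \<eta>2 where B: "0 \<le> \<xi>2" "\<xi>2 \<le> h" "0 \<le> \<eta>2" "\<eta>2 \<le> h"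
    "g (x + h *\<^sub>R w + h *\<^sub>R v) - g (x + h *\<^sub>R w) - g (x + h *\<^sub>R v) + g x
       = h * h * ?G (x + \<xi>2 *\<^sub>R w + \<eta>2 *\<^sub>R v)"
    using schwarz_core[OF S C h, of x w v] inS by blast
  have "g (x + h *\<^sub>R w + h *\<^sub>R v) = g (x + h *\<^sub>R v + h *\<^sub>R w)"
    by (simp add: add_ac)
  then have "h * h * ?F (x + \<xi>1 *\<^sub>R v + \<eta>1 *\<^sub>R w) = h * h * ?G (x + \<xi>2 *\<^sub>R w + \<eta>2 *\<^sub>R v)"
    using A(5) B(5) by linarith
  then have eq: "?F (x + \<xi>1 *\<^sub>R v + \<eta>1 *\<^sub>R w) = ?G (x + \<xi>2 *\<^sub>R w + \<eta>2 *\<^sub>R v)"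
    using h by simp
  have "dist (?F (x + \<xi>1 *\<^sub>R v + \<eta>1 *\<^sub>R w)) (?F x) < e"
    using d1(2) close[OF A(1-4), of v w] unfolding d_def by auto
  moreover have "dist (?G (x + \<xi>2 *\<^sub>R w + \<eta>2 *\<^sub>R v)) (?G x) < e"
    using d2(2) close[OF B(1-4), of w v] unfolding d_def by auto
  ultimately show False using eq unfolding e_def dist_real_def by (simp add: abs_if split: if_splits)
qed

lemma fd_works: "g differentiable (at q) \<Longrightarrow> (g has_derivative (\<lambda>y. frechet_derivative g (at q) y)) (at q)"
  using frechet_derivative_works by (metis eta_contract_eq)

lemma pd_mult:
  assumes "g differentiable (at q)" "h differentiable (at q)"
  shows "pd v (\<lambda>q. g q * h q) q = g q * pd v h q + pd v g q * h q"
  using pd_has[OF has_derivative_mult[OF fd_works[OF assms(1)] fd_works[OF assms(2)]], of v]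
  by (simp add: pd_def)

lemma pd_add:
  assumes "g differentiable (at q)" "h differentiable (at q)"
  shows "pd v (\<lambda>q. g q + h q) q = pd v g q + pd v h q"
  using pd_has[OF has_derivative_add[OF fd_works[OF assms(1)] fd_works[OF assms(2)]], of v]
  by (simp add: pd_def)

lemma pd_diff:
  assumes "g differentiable (at q)" "h differentiable (at q)"
  shows "pd v (\<lambda>q. g q - h q) q = pd v g q - pd v h q"
  using pd_has[OF has_derivative_diff[OF fd_works[OF assms(1)] fd_works[OF assms(2)]], of v]
  by (simp add: pd_def)

lemma coord_has:
  assumes "bounded_linear c" "(k has_real_derivative k') (at (c q))"
  shows "((\<lambda>q. k (c q)) has_derivative (\<lambda>y. k' * c y)) (at q)"
proof -
  have "(c has_derivative c) (at q)" using assms(1) by (rule bounded_linear_imp_has_derivative)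
  from has_derivative_compose[OF this assms(2)[unfolded has_field_derivative_def]]
  show ?thesis by (simp add: o_def)
qed

lemma diff_coord:
  assumes "bounded_linear c" "(k has_real_derivative k') (at (c q))"
  shows "(\<lambda>q. k (c q)) differentiable (at q)"
  using coord_has[OF assms] by (auto simp: differentiable_def)

lemma pd_coord:
  assumes "bounded_linear c" "(k has_real_derivative k') (at (c q))"
  shows "pd v (\<lambda>q. k (c q)) q = k' * c v"
  using pd_has[OF coord_has[OF assms]] .

lemma pd_cmul:
  assumes "bounded_linear c" "(k has_real_derivative k') (at (c q))" "g differentiable (at q)"
  shows "pd v (\<lambda>q. k (c q) * g q) q = k (c q) * pd v g q + k' * c v * g q"
  using pd_mult[OF diff_coord[OF assms(1,2)] assms(3), of v] pd_coord[OF assms(1,2), of v] by simp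

lemma diff_cmul:
  assumes "bounded_linear c" "(k has_real_derivative k') (at (c q))" "g differentiable (at q)"
  shows "(\<lambda>q. k (c q) * g q) differentiable (at q)"
  using diff_coord[OF assms(1,2)] assms(3) by (rule differentiable_mult)

lemma pd_cmul0:
  fixes c :: "pt \<Rightarrow> real" and k :: "real \<Rightarrow> real"
  assumes "bounded_linear c" "k differentiable (at (c q))" "g differentiable (at q)" "c v = 0"
  shows "pd v (\<lambda>q. k (c q) * g q) q = k (c q) * pd v g q"
  using pd_cmul[of c k "deriv k (c q)" q g v] assms
  by (simp add: DERIV_deriv_iff_real_differentiable)

lemma diff_cmul0:
  fixes c :: "pt \<Rightarrow> real" and k :: "real \<Rightarrow> real"
  assumes "bounded_linear c" "k differentiable (at (c q))" "g differentiable (at q)"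
  shows "(\<lambda>q. k (c q) * g q) differentiable (at q)"
  using diff_cmul[of c k "deriv k (c q)" q g] assms
  by (simp add: DERIV_deriv_iff_real_differentiable)

lemma bl_rad: "bounded_linear rad"
proof -
  have "rad = fst" by (simp add: fun_eq_iff rad_def)
  then show ?thesis by (simp add: bounded_linear_fst)
qed

lemma bl_theta: "bounded_linear theta"
proof -
  have "bounded_linear (\<lambda>x::pt. fst (snd (snd x)))"
    using bounded_linear_compose[OF bounded_linear_fst bounded_linear_compose[OF bounded_linear_snd bounded_linear_snd]] .
  then show ?thesis unfolding theta_def[abs_def] .
qed

lemma coords[simp]: "rad e_r = 1" "rad e_t = 0" "rad e_th = 0" "rad e_ph = 0"
  "theta e_r = 0" "theta e_t = 0" "theta e_th = 1" "theta e_ph = 0"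
  by (simp_all add: rad_def theta_def e_r_def e_t_def e_th_def e_ph_def)

lemma rC_facts:
  assumes L: "\<Lambda> > 0" and m: "0 < 3 * m" and m2: "3 * m < 1 / sqrt \<Lambda>"
  shows "r_C \<Lambda> m > 0" "\<And>r. r > r_C \<Lambda> m \<Longrightarrow> D_sds \<Lambda> m r \<noteq> 0"
proof -
  define R where "R = {r. 0 < r \<and> D_sds \<Lambda> m r = 0}"
  define P where "P = [:2*m, -1, 0, \<Lambda>/3:]"
  have "P \<noteq> 0" unfolding P_def by simp
  then have fin0: "finite {x. poly P x = 0}" by (rule poly_roots_finite)
  have "R \<subseteq> {x. poly P x = 0}"
  proof
    fix x assume "x \<in> R"
    then have x: "x > 0" "\<Lambda> / 3 * x ^ 2 - 1 + 2 * m / x = 0" by (auto simp: R_def D_sds_def)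
    then have "x * (\<Lambda> / 3 * x ^ 2 - 1 + 2 * m / x) = 0" by simp
    then have "\<Lambda> / 3 * x ^ 3 - x + 2 * m = 0" using x(1) by (simp add: algebra_simps power3_eq_cube power2_eq_square)
    then show "x \<in> {x. poly P x = 0}" unfolding P_def by (simp add: algebra_simps power3_eq_cube)
  qed
  then have fin: "finite R" using fin0 finite_subset by blast
  define s where "s = sqrt \<Lambda>"
  have s: "s > 0" "s * s = \<Lambda>" using L by (auto simp: s_def)
  have ms: "3 * m * s < 1" using m2 s by (simp add: s_def field_simps)
  define a where "a = 1 / s"
  define b where "b = 3 / s"
  have ab: "0 < a" "a \<le> b" using s by (auto simp: a_def b_def divide_right_mono)
  have Da: "D_sds \<Lambda> m a \<le> 0"
  proof -
    have "D_sds \<Lambda> m a = 1/3 - 1 + 2 * m * s" unfolding D_sds_def a_def using s L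
      by (simp add: field_simps power2_eq_square)
    then show ?thesis using ms by simp
  qed
  have Db: "0 \<le> D_sds \<Lambda> m b"
  proof -
    have "D_sds \<Lambda> m b = 3 - 1 + 2 * m * s / 3" unfolding D_sds_def b_def using s L
      by (simp add: field_simps power2_eq_square)
    then show ?thesis using m s by (simp add: zero_le_mult_iff)
  qed
  have "continuous_on {a..b} (D_sds \<Lambda> m)"
    unfolding D_sds_def using ab by (intro continuous_intros) auto
  then obtain x where x: "a \<le> x" "x \<le> b" "D_sds \<Lambda> m x = 0"
    using IVT'[of "D_sds \<Lambda> m" a 0 b] Da Db ab by auto
  have xR: "x \<in> R" using x ab by (auto simp: R_def)
  have "x \<le> r_C \<Lambda> m" unfolding r_C_def R_def[symmetric] using fin xR by simp
  then show "r_C \<Lambda> m > 0" using x ab by linarith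
  fix r assume r: "r > r_C \<Lambda> m"
  have "r \<notin> R"
  proof
    assume "r \<in> R"
    then have "r \<le> r_C \<Lambda> m" unfolding r_C_def R_def[symmetric] using fin by simp
    then show False using r by simp
  qed
  moreover have "r > 0" using r \<open>x \<le> r_C \<Lambda> m\<close> x ab by linarith
  ultimately show "D_sds \<Lambda> m r \<noteq> 0" by (auto simp: R_def)
qed

lemma C2_real:
  fixes f :: "real \<Rightarrow> real"
  assumes C: "Ck 2 T f" and T: "open T" and x: "x \<in> T"
  shows "(f has_real_derivative deriv f x) (at x)"
    "(deriv f has_real_derivative deriv (deriv f) x) (at x)"
proof -
  have C': "f differentiable_on T \<and> (\<forall>v. Ck (Suc 0) T (\<lambda>x. frechet_derivative f (at x) v))"
    using C by (subst (asm) numeral_2_eq_2, subst (asm) Ck.simps(2)) blast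
  have fdiff: "f differentiable (at y)" if "y \<in> T" for y
    using C' T that by (simp add: differentiable_on_eq_differentiable_at)
  then show "(f has_real_derivative deriv f x) (at x)" using x
    by (simp add: DERIV_deriv_iff_real_differentiable)
  define g where "g y = frechet_derivative f (at y) 1" for y
  have gd: "g differentiable_on T" using C' unfolding g_def by (simp del: Ck.simps(1))
  have geq: "g y = deriv f y" if "y \<in> T" for y
  proof -
    have "(f has_derivative (\<lambda>h. deriv f y * h)) (at y)"
      using fdiff[OF that] by (simp add: DERIV_deriv_iff_real_differentiable[symmetric] has_field_derivative_def)
    from frechet_derivative_at[OF this] show ?thesis unfolding g_def by (metis mult_1_right)
  qed
  have "(g has_real_derivative deriv g x) (at x)"
    using gd T x by (simp add: differentiable_on_eq_differentiable_at DERIV_deriv_iff_real_differentiable)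
  then have "(deriv f has_real_derivative deriv g x) (at x)"
    by (rule has_field_derivative_transform_within_open[OF _ T x]) (simp add: geq)
  then show "(deriv f has_real_derivative deriv (deriv f) x) (at x)"
    using DERIV_imp_deriv by metis
qed

theorem lemma4p1:
  fixes \<Lambda> m :: real and f :: "real \<Rightarrow> real" and \<psi> :: "pt \<Rightarrow> real"
  assumes "\<Lambda> > 0" and "0 < 3 * m" and "3 * m < 1 / sqrt \<Lambda>"
    and "Ck 2 {r_C \<Lambda> m<..} f"
    and "\<And>r. r > r_C \<Lambda> m \<Longrightarrow> f r > 0"
    and "Ck 3 (expanding_region \<Lambda> m) \<psi>"
    and "p \<in> expanding_region \<Lambda> m"
  shows "let D = D_sds \<Lambda> m; r = rad p;
             X = (\<lambda>g q. f (rad q) * pd e_r g q);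
             \<phi> = 1 / sqrt (D r)
         in box_g \<Lambda> m (X \<psi>) p =
            X (box_g \<Lambda> m \<psi>) p
            + (f r)^2 / r^2 * deriv (\<lambda>s. s^2 * D s / (f s)^2) r * pd e_r (X \<psi>) p
            + (f r)^2 / r^2 * deriv (deriv (\<lambda>s. s^2 * D s / f s)) r * pd e_r \<psi> p
            + 2 * f r * \<phi>^4 * (1 / r - 3 * m / r^2) * pd e_t (pd e_t \<psi>) p
            + 2 * f r / r * box_g \<Lambda> m \<psi> p"
proof -
  let ?D = "D_sds \<Lambda> m"
  define S where "S = expanding_region \<Lambda> m"
  define rc where "rc = r_C \<Lambda> m"
  have rc: "rc > 0" using rC_facts(1)[OF assms(1-3)] by (simp add: rc_def)
  have Dnz: "\<And>r. r > rc \<Longrightarrow> ?D r \<noteq> 0" using rC_facts(2)[OF assms(1-3)] by (simp add: rc_def)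
  have So: "open S" unfolding S_def expanding_region_def
    by (intro open_Times open_greaterThan open_UNIV open_greaterThanLessThan)
  have pS: "p \<in> S" using assms(7) by (simp add: S_def)
  have inS: "rad q > rc" "0 < theta q" "theta q < pi" if "q \<in> S" for q
    using that by (auto simp: S_def expanding_region_def rc_def rad_def theta_def)
  have sinpos: "sin (theta q) > 0" if "q \<in> S" for q using inS[OF that] by (simp add: sin_gt_zero)
  have radpos: "rad q > 0" if "q \<in> S" for q using inS(1)[OF that] rc by linarith
  define f1 where "f1 = deriv f"
  define f2 where "f2 = deriv f1"
  have T: "open {rc<..}" by simp
  have fC: "Ck 2 {rc<..} f" using assms(4) by (simp add: rc_def)
  have fd: "(f has_real_derivative f1 r) (at r)" if "r > rc" for r
    using C2_real(1)[OF fC T] that by (simp add: f1_def)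
  have f1d: "(f1 has_real_derivative f2 r) (at r)" if "r > rc" for r
    using C2_real(2)[OF fC T] that by (simp add: f1_def f2_def)
  have fpos: "f r > 0" if "r > rc" for r using assms(5) that by (simp add: rc_def)
  define Dp where "Dp r = 2*\<Lambda>*r/3 - 2*m/r^2" for r
  define Dpp where "Dpp r = 2*\<Lambda>/3 + 4*m/r^3" for r
  have Dd: "(?D has_real_derivative Dp r) (at r)" if "r > 0" for r
    unfolding D_sds_def[abs_def] Dp_def using that
    by (auto intro!: derivative_eq_intros simp: field_simps power2_eq_square)
  have Dpd: "(Dp has_real_derivative Dpp r) (at r)" if "r > 0" for r
    unfolding Dpp_def Dp_def[abs_def] using that
    by (auto intro!: derivative_eq_intros simp: field_simps power2_eq_square power3_eq_cube)
  have C3: "Ck (Suc (Suc (Suc 0))) S \<psi>" using assms(6) by (simp add: S_def numeral_3_eq_3)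
  have d0: "\<psi> differentiable (at q)" if "q \<in> S" for q using Ck_SucD(1)[OF C3 So that] .
  have C2v: "Ck (Suc (Suc 0)) S (pd v \<psi>)" for v using Ck_SucD(2)[OF C3 So pS] .
  have d1: "pd v \<psi> differentiable (at q)" if "q \<in> S" for v q using Ck_SucD(1)[OF C2v So that] .
  have C1v: "Ck (Suc 0) S (pd w (pd v \<psi>))" for v w using Ck_SucD(2)[OF C2v So pS] .
  have d2: "pd w (pd v \<psi>) differentiable (at q)" if "q \<in> S" for v w q using Ck_SucD(1)[OF C1v So that] .
  have C2: "Ck 2 S \<psi>" using Ck_Suc_mono[OF C3] by (simp add: numeral_2_eq_2)
  have sw1: "pd v (pd w \<psi>) q = pd w (pd v \<psi>) q" if "q \<in> S" for v w q using schwarz[OF So C2 that] .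
  have sw2: "pd a (pd v (pd w \<psi>)) q = pd v (pd a (pd w \<psi>)) q" if "q \<in> S" for a v w q
    using schwarz[OF So _ that] C2v[of w] by (simp add: numeral_2_eq_2)
  have sw3: "pd a (pd v (pd v \<psi>)) p = pd v (pd v (pd a \<psi>)) p" for a v
  proof -
    have "pd a (pd v (pd v \<psi>)) p = pd v (pd a (pd v \<psi>)) p" using sw2[OF pS] .
    also have "\<dots> = pd v (pd v (pd a \<psi>)) p"
      by (rule pd_cong[OF So pS]) (rule sw1)
    finally show ?thesis .
  qed
  define r0 where "r0 = rad p"
  define th where "th = theta p"
  have r0: "r0 > rc" "r0 > 0" using inS(1)[OF pS] radpos[OF pS] by (auto simp: r0_def)
  have th: "sin th > 0" using sinpos[OF pS] by (simp add: th_def)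
  let ?X = "\<lambda>q. f (rad q) * pd e_r \<psi> q"
  have fdq: "(f has_real_derivative f1 (rad q)) (at (rad q))" if "q \<in> S" for q
    using fd inS(1)[OF that] by blast
  have Xv: "pd v ?X q = f (rad q) * pd v (pd e_r \<psi>) q + f1 (rad q) * rad v * pd e_r \<psi> q"
    if "q \<in> S" for v q
    using pd_cmul[OF bl_rad fdq[OF that] d1[OF that], of v] .
  have Xd: "?X differentiable (at q)" if "q \<in> S" for q
    using diff_cmul[OF bl_rad fdq[OF that] d1[OF that]] .
  have Lt2: "pd e_t (pd e_t ?X) p = f r0 * pd e_t (pd e_t (pd e_r \<psi>)) p"
  proof -
    have "pd e_t (pd e_t ?X) p = pd e_t (\<lambda>q. f (rad q) * pd e_t (pd e_r \<psi>) q) p"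
      by (rule pd_cong[OF So pS]) (simp add: Xv)
    also have "\<dots> = f r0 * pd e_t (pd e_t (pd e_r \<psi>)) p"
      using pd_cmul[OF bl_rad fdq[OF pS] d2[OF pS], of e_t] by (simp add: r0_def)
    finally show ?thesis .
  qed
  have Lph2: "pd e_ph (pd e_ph ?X) p = f r0 * pd e_ph (pd e_ph (pd e_r \<psi>)) p"
  proof -
    have "pd e_ph (pd e_ph ?X) p = pd e_ph (\<lambda>q. f (rad q) * pd e_ph (pd e_r \<psi>) q) p"
      by (rule pd_cong[OF So pS]) (simp add: Xv)
    also have "\<dots> = f r0 * pd e_ph (pd e_ph (pd e_r \<psi>)) p"
      using pd_cmul[OF bl_rad fdq[OF pS] d2[OF pS], of e_ph] by (simp add: r0_def)
    finally show ?thesis .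
  qed
  have sind: "(sin has_real_derivative cos (theta q)) (at (theta q))" for q
    by (rule DERIV_sin)
  have Lth2: "pd e_th (\<lambda>q. sin (theta q) * pd e_th ?X q) p
      = sin th * (f r0 * pd e_th (pd e_th (pd e_r \<psi>)) p) + cos th * (f r0 * pd e_th (pd e_r \<psi>) p)"
  proof -
    have "pd e_th (\<lambda>q. sin (theta q) * pd e_th ?X q) p
        = pd e_th (\<lambda>q. sin (theta q) * (f (rad q) * pd e_th (pd e_r \<psi>) q)) p"
      by (rule pd_cong[OF So pS]) (simp add: Xv)
    also have "\<dots> = sin th * pd e_th (\<lambda>q. f (rad q) * pd e_th (pd e_r \<psi>) q) p
        + cos th * (f r0 * pd e_th (pd e_r \<psi>) p)"
      using pd_cmul[OF bl_theta sind diff_cmul[OF bl_rad fdq[OF pS] d2[OF pS]], of e_th]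
      by (simp add: r0_def th_def)
    also have "pd e_th (\<lambda>q. f (rad q) * pd e_th (pd e_r \<psi>) q) p = f r0 * pd e_th (pd e_th (pd e_r \<psi>)) p"
      using pd_cmul[OF bl_rad fdq[OF pS] d2[OF pS], of e_th] by (simp add: r0_def)
    finally show ?thesis .
  qed
  have fd0: "(f has_real_derivative f1 r0) (at r0)" using fd r0 by blast
  have f1d0: "(f1 has_real_derivative f2 r0) (at r0)" using f1d r0 by blast
  have Dd0: "(?D has_real_derivative Dp r0) (at r0)" using Dd r0 by blast
  have Dpd0: "(Dp has_real_derivative Dpp r0) (at r0)" using Dpd r0 by blast
  have K1d: "((\<lambda>r. r^2 * ?D r * f r) has_real_derivative
      (2*r0*?D r0 + r0^2*Dp r0)*f r0 + r0^2*?D r0*f1 r0) (at (rad p))"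
    unfolding r0_def[symmetric]
    by (auto intro!: derivative_eq_intros fd0 Dd0 simp: algebra_simps)
  have K2d: "((\<lambda>r. r^2 * ?D r * f1 r) has_real_derivative
      (2*r0*?D r0 + r0^2*Dp r0)*f1 r0 + r0^2*?D r0*f2 r0) (at (rad p))"
    unfolding r0_def[symmetric]
    by (auto intro!: derivative_eq_intros f1d0 Dd0 simp: algebra_simps)
  have Lr2: "pd e_r (\<lambda>q. (rad q)^2 * ?D (rad q) * pd e_r ?X q) p
     = r0^2 * ?D r0 * f r0 * pd e_r (pd e_r (pd e_r \<psi>)) p
       + ((2*r0*?D r0 + r0^2*Dp r0)*f r0 + r0^2*?D r0*f1 r0) * pd e_r (pd e_r \<psi>) p
       + (r0^2 * ?D r0 * f1 r0 * pd e_r (pd e_r \<psi>) p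
       + ((2*r0*?D r0 + r0^2*Dp r0)*f1 r0 + r0^2*?D r0*f2 r0) * pd e_r \<psi> p)"
  proof -
    have "pd e_r (\<lambda>q. (rad q)^2 * ?D (rad q) * pd e_r ?X q) p
      = pd e_r (\<lambda>q. (rad q)^2 * ?D (rad q) * f (rad q) * pd e_r (pd e_r \<psi>) q
                  + (rad q)^2 * ?D (rad q) * f1 (rad q) * pd e_r \<psi> q) p"
      by (rule pd_cong[OF So pS]) (simp add: Xv algebra_simps)
    also have "\<dots> = pd e_r (\<lambda>q. (rad q)^2 * ?D (rad q) * f (rad q) * pd e_r (pd e_r \<psi>) q) p
                  + pd e_r (\<lambda>q. (rad q)^2 * ?D (rad q) * f1 (rad q) * pd e_r \<psi> q) p"
      by (rule pd_add[OF diff_cmul[OF bl_rad K1d d2[OF pS]] diff_cmul[OF bl_rad K2d d1[OF pS]]])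
    finally show ?thesis
      using pd_cmul[OF bl_rad K1d d2[OF pS], of e_r] pd_cmul[OF bl_rad K2d d1[OF pS], of e_r]
      by (simp add: r0_def)
  qed
  have L: "box_g \<Lambda> m ?X p = 1 / ?D r0 * (f r0 * pd e_t (pd e_t (pd e_r \<psi>)) p)
     - 1 / r0^2 * (r0^2 * ?D r0 * f r0 * pd e_r (pd e_r (pd e_r \<psi>)) p
       + ((2*r0*?D r0 + r0^2*Dp r0)*f r0 + r0^2*?D r0*f1 r0) * pd e_r (pd e_r \<psi>) p
       + (r0^2 * ?D r0 * f1 r0 * pd e_r (pd e_r \<psi>) p
       + ((2*r0*?D r0 + r0^2*Dp r0)*f1 r0 + r0^2*?D r0*f2 r0) * pd e_r \<psi> p))
     + 1 / r0^2 * (1 / sin th * (sin th * (f r0 * pd e_th (pd e_th (pd e_r \<psi>)) p) + cos th * (f r0 * pd e_th (pd e_r \<psi>) p))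
       + 1 / (sin th)^2 * (f r0 * pd e_ph (pd e_ph (pd e_r \<psi>)) p))"
    by (simp only: box_g_def lap_S2_def r0_def[symmetric] th_def[symmetric] Lt2 Lr2 Lth2 Lph2)
  have Hd: "((\<lambda>r. r^2 * ?D r) has_real_derivative 2*rad q*?D (rad q) + (rad q)^2*Dp (rad q)) (at (rad q))"
    if "q \<in> S" for q
    using Dd[OF radpos[OF that]] by (auto intro!: derivative_eq_intros simp: algebra_simps)
  have Rr1: "pd e_r (\<lambda>q. (rad q)^2 * ?D (rad q) * pd e_r \<psi> q) q
      = (rad q)^2 * ?D (rad q) * pd e_r (pd e_r \<psi>) q + (2*rad q*?D (rad q) + (rad q)^2*Dp (rad q)) * pd e_r \<psi> q"
    if "q \<in> S" for q
    using pd_cmul[OF bl_rad Hd[OF that] d1[OF that], of e_r] by simp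
  have Rth1: "pd e_th (\<lambda>q. sin (theta q) * pd e_th \<psi> q) q
      = sin (theta q) * pd e_th (pd e_th \<psi>) q + cos (theta q) * pd e_th \<psi> q"
    if "q \<in> S" for q
    using pd_cmul[OF bl_theta sind d1[OF that], of e_th] by simp
  have Rbox: "box_g \<Lambda> m \<psi> q = 1 / ?D (rad q) * pd e_t (pd e_t \<psi>) q
      - ((2*rad q*?D (rad q) + (rad q)^2*Dp (rad q)) / (rad q)^2 * pd e_r \<psi> q + ?D (rad q) * pd e_r (pd e_r \<psi>) q)
      + 1 / (rad q)^2 * (pd e_th (pd e_th \<psi>) q + cos (theta q) / sin (theta q) * pd e_th \<psi> q
           + 1 / (sin (theta q))^2 * pd e_ph (pd e_ph \<psi>) q)"
    if "q \<in> S" for q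
  proof -
    have "rad q \<noteq> 0" "sin (theta q) \<noteq> 0" using radpos[OF that] sinpos[OF that] by auto
    then show ?thesis
      unfolding box_g_def lap_S2_def Rr1[OF that] Rth1[OF that]
      by (simp add: field_simps)
  qed
  have Dr0: "?D r0 \<noteq> 0" using Dnz r0 by blast
  have sth: "sin th \<noteq> 0" using th by simp
  have A1d: "((\<lambda>r. 1 / ?D r) has_real_derivative - Dp r0 / (?D r0)^2) (at (rad p))"
    unfolding r0_def[symmetric] using Dr0
    by (auto intro!: derivative_eq_intros Dd0 simp: field_simps power2_eq_square)
  have A2d: "((\<lambda>r. (2*r*?D r + r^2*Dp r) / r^2) has_real_derivative
     ((2*?D r0 + 4*r0*Dp r0 + r0^2*Dpp r0)*r0^2 - (2*r0*?D r0 + r0^2*Dp r0)*(2*r0)) / (r0^2)^2) (at (rad p))"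
    unfolding r0_def[symmetric] using r0
    by (auto intro!: derivative_eq_intros Dd0 Dpd0 simp: field_simps power2_eq_square)
  have A3d: "((\<lambda>r. 1 / r^2) has_real_derivative - 2 / r0^3) (at (rad p))"
    unfolding r0_def[symmetric] using r0
    by (auto intro!: derivative_eq_intros simp: field_simps power2_eq_square power3_eq_cube)
  have Dd0': "(?D has_real_derivative Dp r0) (at (rad p))" using Dd0 by (simp add: r0_def)
  have cosdiff: "cos differentiable (at x)" "sin differentiable (at x)" for x :: real
    using DERIV_cos DERIV_sin real_differentiable_def by blast+
  have Cd: "(\<lambda>x. cos x / sin x) differentiable (at (theta p))"
    using sth cosdiff unfolding th_def by (auto intro!: derivative_intros)
  have Ed: "(\<lambda>x. 1 / (sin x)^2) differentiable (at (theta p))"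
    using sth cosdiff unfolding th_def by (auto intro!: derivative_intros)
  let ?g = "\<lambda>q. pd e_th (pd e_th \<psi>) q + cos (theta q) / sin (theta q) * pd e_th \<psi> q
           + 1 / (sin (theta q))^2 * pd e_ph (pd e_ph \<psi>) q"
  have gd1: "(\<lambda>q. cos (theta q) / sin (theta q) * pd e_th \<psi> q) differentiable (at p)"
    using diff_cmul0[OF bl_theta Cd d1[OF pS]] by simp
  have gd2: "(\<lambda>q. 1 / (sin (theta q))^2 * pd e_ph (pd e_ph \<psi>) q) differentiable (at p)"
    using diff_cmul0[OF bl_theta Ed d2[OF pS]] by simp
  have gd: "?g differentiable (at p)"
    by (intro differentiable_add d2[OF pS] gd1 gd2)
  have gpd: "pd e_r ?g p = pd e_r (pd e_th (pd e_th \<psi>)) p + cos th / sin th * pd e_r (pd e_th \<psi>) p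
           + 1 / (sin th)^2 * pd e_r (pd e_ph (pd e_ph \<psi>)) p"
  proof -
    have "pd e_r ?g p = pd e_r (\<lambda>q. pd e_th (pd e_th \<psi>) q + cos (theta q) / sin (theta q) * pd e_th \<psi> q) p
           + pd e_r (\<lambda>q. 1 / (sin (theta q))^2 * pd e_ph (pd e_ph \<psi>) q) p"
      by (rule pd_add[OF differentiable_add[OF d2[OF pS] gd1] gd2])
    also have "pd e_r (\<lambda>q. pd e_th (pd e_th \<psi>) q + cos (theta q) / sin (theta q) * pd e_th \<psi> q) p
       = pd e_r (pd e_th (pd e_th \<psi>)) p + pd e_r (\<lambda>q. cos (theta q) / sin (theta q) * pd e_th \<psi> q) p"
      by (rule pd_add[OF d2[OF pS] gd1])
    finally show ?thesis
      using pd_cmul0[OF bl_theta Cd d1[OF pS], of e_r] pd_cmul0[OF bl_theta Ed d2[OF pS], of e_r]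
      by (simp add: th_def)
  qed
  let ?a = "\<lambda>q. 1 / ?D (rad q) * pd e_t (pd e_t \<psi>) q"
  let ?b1 = "\<lambda>q. (2*rad q*?D (rad q) + (rad q)^2*Dp (rad q)) / (rad q)^2 * pd e_r \<psi> q"
  let ?b2 = "\<lambda>q. ?D (rad q) * pd e_r (pd e_r \<psi>) q"
  let ?c = "\<lambda>q. 1 / (rad q)^2 * ?g q"
  have ad: "?a differentiable (at p)" by (rule diff_cmul[OF bl_rad A1d d2[OF pS]])
  have b1d: "?b1 differentiable (at p)" by (rule diff_cmul[OF bl_rad A2d d1[OF pS]])
  have b2d: "?b2 differentiable (at p)" by (rule diff_cmul[OF bl_rad Dd0' d2[OF pS]])
  have cd: "?c differentiable (at p)" by (rule diff_cmul[OF bl_rad A3d gd])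
  have Rb2: "pd e_r (box_g \<Lambda> m \<psi>) p =
      (1 / ?D r0 * pd e_r (pd e_t (pd e_t \<psi>)) p + - Dp r0 / (?D r0)^2 * pd e_t (pd e_t \<psi>) p)
      - (((2*r0*?D r0 + r0^2*Dp r0) / r0^2 * pd e_r (pd e_r \<psi>) p
          + ((2*?D r0 + 4*r0*Dp r0 + r0^2*Dpp r0)*r0^2 - (2*r0*?D r0 + r0^2*Dp r0)*(2*r0)) / (r0^2)^2 * pd e_r \<psi> p)
         + (?D r0 * pd e_r (pd e_r (pd e_r \<psi>)) p + Dp r0 * pd e_r (pd e_r \<psi>) p))
      + (1 / r0^2 * (pd e_r (pd e_th (pd e_th \<psi>)) p + cos th / sin th * pd e_r (pd e_th \<psi>) p
           + 1 / (sin th)^2 * pd e_r (pd e_ph (pd e_ph \<psi>)) p)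
         + - 2 / r0^3 * (pd e_th (pd e_th \<psi>) p + cos th / sin th * pd e_th \<psi> p
           + 1 / (sin th)^2 * pd e_ph (pd e_ph \<psi>) p))"
  proof -
    have "pd e_r (box_g \<Lambda> m \<psi>) p = pd e_r (\<lambda>q. ?a q - (?b1 q + ?b2 q) + ?c q) p"
      by (rule pd_cong[OF So pS]) (rule Rbox)
    also have "\<dots> = pd e_r (\<lambda>q. ?a q - (?b1 q + ?b2 q)) p + pd e_r ?c p"
      by (rule pd_add[OF differentiable_diff[OF ad differentiable_add[OF b1d b2d]] cd])
    also have "pd e_r (\<lambda>q. ?a q - (?b1 q + ?b2 q)) p = pd e_r ?a p - pd e_r (\<lambda>q. ?b1 q + ?b2 q) p"
      by (rule pd_diff[OF ad differentiable_add[OF b1d b2d]])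
    also have "pd e_r (\<lambda>q. ?b1 q + ?b2 q) p = pd e_r ?b1 p + pd e_r ?b2 p"
      by (rule pd_add[OF b1d b2d])
    finally show ?thesis
      using pd_cmul[OF bl_rad A1d d2[OF pS], of e_r] pd_cmul[OF bl_rad A2d d1[OF pS], of e_r]
        pd_cmul[OF bl_rad Dd0' d2[OF pS], of e_r] pd_cmul[OF bl_rad A3d gd, of e_r] gpd
      by (simp add: r0_def th_def)
  qed
  have f0: "f r0 > 0" using fpos r0 by blast
  have T1: "deriv (\<lambda>s. s^2 * ?D s / (f s)^2) r0 =
     ((2*r0*?D r0 + r0^2*Dp r0) * (f r0)^2 - r0^2 * ?D r0 * (2 * f r0 * f1 r0)) / ((f r0)^2)^2"
    by (rule DERIV_imp_deriv) (use f0 in \<open>auto intro!: derivative_eq_intros fd0 Dd0 simp: field_simps power2_eq_square\<close>)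
  have Qeq: "deriv (\<lambda>x. x^2 * ?D x / f x) x = ((2*x*?D x + x^2*Dp x) * f x - x^2 * ?D x * f1 x) / (f x)^2"
    if "x \<in> {rc<..}" for x
  proof -
    have xx: "x > rc" "x > 0" "f x > 0" using that rc fpos by auto
    show ?thesis
      by (rule DERIV_imp_deriv) (use xx in \<open>auto intro!: derivative_eq_intros fd Dd simp: field_simps power2_eq_square\<close>)
  qed
  have Qd: "((\<lambda>x. ((2*x*?D x + x^2*Dp x) * f x - x^2 * ?D x * f1 x) / (f x)^2) has_real_derivative
     (((2*?D r0 + 4*r0*Dp r0 + r0^2*Dpp r0) * f r0 + (2*r0*?D r0 + r0^2*Dp r0)*f1 r0
        - ((2*r0*?D r0 + r0^2*Dp r0)*f1 r0 + r0^2*?D r0*f2 r0)) * (f r0)^2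
      - ((2*r0*?D r0 + r0^2*Dp r0) * f r0 - r0^2 * ?D r0 * f1 r0) * (2*f r0*f1 r0)) / ((f r0)^2)^2) (at r0)"
    using f0 by (auto intro!: derivative_eq_intros fd0 f1d0 Dd0 Dpd0 simp: field_simps power2_eq_square)
  have T2: "deriv (deriv (\<lambda>s. s^2 * ?D s / f s)) r0 =
     (((2*?D r0 + 4*r0*Dp r0 + r0^2*Dpp r0) * f r0 + (2*r0*?D r0 + r0^2*Dp r0)*f1 r0
        - ((2*r0*?D r0 + r0^2*Dp r0)*f1 r0 + r0^2*?D r0*f2 r0)) * (f r0)^2
      - ((2*r0*?D r0 + r0^2*Dp r0) * f r0 - r0^2 * ?D r0 * f1 r0) * (2*f r0*f1 r0)) / ((f r0)^2)^2"
    apply (rule DERIV_imp_deriv)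
    apply (rule has_field_derivative_transform_within_open[OF Qd T])
    using r0 Qeq by auto
  have Dpr: "Dp r0 = 2*(?D r0 + 1)/r0 - 6*m/r0^2"
    using r0 unfolding Dp_def D_sds_def by (simp add: field_simps power2_eq_square)
  have Dppr: "Dpp r0 = 2*(?D r0 + 1)/r0^2"
    using r0 unfolding Dpp_def D_sds_def by (simp add: field_simps power2_eq_square power3_eq_cube)
  have phi4: "(1 / sqrt (?D r0))^4 = 1 / (?D r0)^2"
  proof -
    have "(sqrt (?D r0))^4 = (sqrt (?D r0) * sqrt (?D r0))^2" by (simp add: power_mult_distrib flip: power2_eq_square power_mult)
    also have "\<dots> = (?D r0)^2" by simp
    finally show ?thesis by (simp add: power_one_over)
  qed
  have Xp: "pd e_r ?X p = f r0 * pd e_r (pd e_r \<psi>) p + f1 r0 * pd e_r \<psi> p"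
    using Xv[OF pS, of e_r] by (simp add: r0_def)
  have Rboxp: "box_g \<Lambda> m \<psi> p = 1 / ?D r0 * pd e_t (pd e_t \<psi>) p
      - ((2*r0*?D r0 + r0^2*Dp r0) / r0^2 * pd e_r \<psi> p + ?D r0 * pd e_r (pd e_r \<psi>) p)
      + 1 / r0^2 * (pd e_th (pd e_th \<psi>) p + cos th / sin th * pd e_th \<psi> p
           + 1 / (sin th)^2 * pd e_ph (pd e_ph \<psi>) p)"
    using Rbox[OF pS] by (simp add: r0_def th_def)
  have s1: "pd e_r (pd e_t (pd e_t \<psi>)) p = pd e_t (pd e_t (pd e_r \<psi>)) p" by (rule sw3)
  have s2: "pd e_r (pd e_th (pd e_th \<psi>)) p = pd e_th (pd e_th (pd e_r \<psi>)) p" by (rule sw3)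
  have s3: "pd e_r (pd e_ph (pd e_ph \<psi>)) p = pd e_ph (pd e_ph (pd e_r \<psi>)) p" by (rule sw3)
  have s4: "pd e_r (pd e_th \<psi>) p = pd e_th (pd e_r \<psi>) p" by (rule sw1[OF pS])
  show ?thesis
    unfolding Let_def r0_def[symmetric] L Rb2 T1 T2 Xp Rboxp s1 s2 s3 s4 phi4
    using r0 th Dr0 f0
    apply (simp add: Dpr Dppr field_simps)
    apply algebra
    done
qed

end
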